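(* Let $\alpha:X\to P(A\times X+1)$ be a discrete probabilistic transition system with $X$ finite, and let $x,y\in X$. Then the algorithm $\texttt{HKC}^\infty(x,y)$ described in the context terminates (for any order of extraction from $\mathit{todo}$), and it returns true if and only if $\langle\!\langle x\rangle\!\rangle=\langle\!\langle y\rangle\!\rangle$.
   Context: $A$ is a finite alphabet, $1=\{*\}$, $P(Y)$ the set of finitely supported probability distributions on $Y$, $\delta_x$ the point mass at $x$. $A^\infty=A^*\cup A^\omega$ with $\sigma$-algebra generated by $\{\emptyset\}\cup\{\{w\}\mid w\in A^*\}\cup\{wA^\infty\mid w\in A^*\}$. The trace semantics $\langle\!\langle x\rangle\!\rangle$ is the unique family of sub-probability measures on $A^\infty$ with $\langle\!\langle x\rangle\!\rangle(A^\infty)=1$, $\langle\!\langle x\rangle\!\rangle(\{\varepsilon\})=\alpha(x)( * )$, $\langle\!\langle x\rangle\!\rangle(awA^\infty)=\sum_y\alpha(x)(a,y)\langle\!\langle y\rangle\!\rangle(wA^\infty)$, $\langle\!\langle x\rangle\!\rangle(\{aw\})=\sum_y\alpha(x)(a,y)\langle\!\langle y\rangle\!\rangle(\{w\})$. On $\mathbb R^X$ define linear maps $\beta_1(u)=\sum_x u(x)$, $\beta_*(u)=\sum_x u(x)\alpha(x)( * )$, $\tau_a(u)(y)=\sum_x u(x)\alpha(x)(a,y)$. For $R\subseteq\mathbb R^X\times\mathbb R^X$, its congruence closure $c(R)$ is the smallest relation containing $R$ that is reflexive, symmetric, transitive, and closed under $(u,v)\mapsto(\lambda u,\lambda v)$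 for $\lambda\in\mathbb R$ and under $(u,v),(u',v')\mapsto(u+u',v+v')$. Algorithm $\texttt{HKC}^\infty(x,y)$: set $R:=\emptyset$, $\mathit{todo}:=\{(\delta_x,\delta_y)\}$; while $\mathit{todo}\neq\emptyset$: extract a pair $(u,v)$ from $\mathit{todo}$; if $(u,v)\in c(R)$, continue with the next iteration; if $\beta_1(u)\neq\beta_1(v)$ or $\beta_*(u)\neq\beta_*(v)$, return false; for all $a\in A$ insert $(\tau_a(u),\tau_a(v))$ into $\mathit{todo}$; insert $(u,v)$ into $R$. When $\mathit{todo}$ is empty, return true. *)

theory Defs
  imports "HOL-Probability.Probability"
begin

(* A discrete probabilistic transition system alpha : X -> P(A x X + 1) is modelled as
   alpha :: 'x => ('a * 'x) option pmf, where None plays the role of the element * of 1.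
   X and A are finite types, so every distribution is finitely supported. *)

(* A^infinity = A^* \<union> A^omega: finite words are Inl w, infinite words are Inr f. *)
type_synonym 'a word_inf = "'a list + (nat \<Rightarrow> 'a)"

definition cone :: "'a list \<Rightarrow> 'a word_inf set" where
  "cone w = {Inl v | v. \<exists>r. v = w @ r} \<union> {Inr f | f. \<forall>i < length w. f i = w ! i}"

definition inf_gens :: "'a word_inf set set" where
  "inf_gens = {{}} \<union> range (\<lambda>w. {Inl w}) \<union> range cone"

definition Ainf :: "'a word_inf measure" where
  "Ainf = sigma UNIV inf_gens"

definition is_trace_sem :: "('x::finite \<Rightarrow> ('a \<times> 'x) option pmf) \<Rightarrow> ('x \<Rightarrow> 'a word_inf measure) \<Rightarrow> bool" where
  "is_trace_sem \<alpha> tr \<longleftrightarrow>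
     (\<forall>x. sets (tr x) = sets Ainf \<and> space (tr x) = space Ainf \<and>
        emeasure (tr x) UNIV = 1 \<and>
        emeasure (tr x) {Inl []} = ennreal (pmf (\<alpha> x) None) \<and>
        (\<forall>a w. emeasure (tr x) (cone (a # w)) =
            (\<Sum>y\<in>UNIV. ennreal (pmf (\<alpha> x) (Some (a, y))) * emeasure (tr y) (cone w))) \<and>
        (\<forall>a w. emeasure (tr x) {Inl (a # w)} =
            (\<Sum>y\<in>UNIV. ennreal (pmf (\<alpha> x) (Some (a, y))) * emeasure (tr y) {Inl w})))"

definition beta1 :: "('x::finite \<Rightarrow> real) \<Rightarrow> real" where
  "beta1 u = (\<Sum>x\<in>UNIV. u x)"

definition betastar :: "('x::finite \<Rightarrow> ('a \<times> 'x) option pmf) \<Rightarrow> ('x \<Rightarrow> real) \<Rightarrow> real" where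
  "betastar \<alpha> u = (\<Sum>x\<in>UNIV. u x * pmf (\<alpha> x) None)"

definition tau :: "('x::finite \<Rightarrow> ('a \<times> 'x) option pmf) \<Rightarrow> 'a \<Rightarrow> ('x \<Rightarrow> real) \<Rightarrow> ('x \<Rightarrow> real)" where
  "tau \<alpha> a u = (\<lambda>y. \<Sum>x\<in>UNIV. u x * pmf (\<alpha> x) (Some (a, y)))"

definition dirac_vec :: "'x \<Rightarrow> ('x \<Rightarrow> real)" where
  "dirac_vec x = (\<lambda>z. if z = x then 1 else 0)"

inductive_set cclos :: "(('x \<Rightarrow> real) \<times> ('x \<Rightarrow> real)) set \<Rightarrow> (('x \<Rightarrow> real) \<times> ('x \<Rightarrow> real)) set"
  for R where
  base: "p \<in> R \<Longrightarrow> p \<in> cclos R"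
| refl: "(u, u) \<in> cclos R"
| sym: "(u, v) \<in> cclos R \<Longrightarrow> (v, u) \<in> cclos R"
| trans: "(u, v) \<in> cclos R \<Longrightarrow> (v, w) \<in> cclos R \<Longrightarrow> (u, w) \<in> cclos R"
| scale: "(u, v) \<in> cclos R \<Longrightarrow> (\<lambda>z. c * u z, \<lambda>z. c * v z) \<in> cclos R"
| add: "(u, v) \<in> cclos R \<Longrightarrow> (u', v') \<in> cclos R \<Longrightarrow> (\<lambda>z. u z + u' z, \<lambda>z. v z + v' z) \<in> cclos R"

datatype 'x hkc_state =
    Running "(('x \<Rightarrow> real) \<times> ('x \<Rightarrow> real)) set" "(('x \<Rightarrow> real) \<times> ('x \<Rightarrow> real)) multiset"
  | Done bool

(* one iteration of the while loop; the extracted pair is chosen arbitrarily *)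
inductive hkc_step :: "('x::finite \<Rightarrow> ('a::finite \<times> 'x) option pmf) \<Rightarrow> 'x hkc_state \<Rightarrow> 'x hkc_state \<Rightarrow> bool"
  for \<alpha> where
  finish: "hkc_step \<alpha> (Running R {#}) (Done True)"
| skip: "p \<in># todo \<Longrightarrow> p \<in> cclos R \<Longrightarrow>
     hkc_step \<alpha> (Running R todo) (Running R (todo - {#p#}))"
| fail: "(u, v) \<in># todo \<Longrightarrow> (u, v) \<notin> cclos R \<Longrightarrow>
     beta1 u \<noteq> beta1 v \<or> betastar \<alpha> u \<noteq> betastar \<alpha> v \<Longrightarrow>
     hkc_step \<alpha> (Running R todo) (Done False)"
| expand: "(u, v) \<in># todo \<Longrightarrow> (u, v) \<notin> cclos R \<Longrightarrow>
     beta1 u = beta1 v \<Longrightarrow> betastar \<alpha> u = betastar \<alpha> v \<Longrightarrow>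
     hkc_step \<alpha> (Running R todo)
       (Running (insert (u, v) R)
          ((todo - {#(u, v)#}) + image_mset (\<lambda>a. (tau \<alpha> a u, tau \<alpha> a v)) (mset_set (UNIV :: 'a set))))"

definition hkc_init :: "'x \<Rightarrow> 'x \<Rightarrow> 'x hkc_state" where
  "hkc_init x y = Running {} {#(dirac_vec x, dirac_vec y)#}"

end

theory Submission
  imports Defs "HOL-Analysis.Analysis"
begin

lemma cclos_sub:
  assumes "p \<in> cclos R" "R \<subseteq> cclos S"
  shows "p \<in> cclos S"
  using assms(1) by induction (use assms(2) in \<open>auto intro: cclos.intros\<close>)

lemma cclos_kernel:
  assumes "p \<in> cclos R" "\<forall>(u,v)\<in>R. F u = F v"
    "\<And>c u. F (\<lambda>z. c * u z) = c * F u"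
    "\<And>u u'. F (\<lambda>z. u z + u' z) = F u + F u'"
  shows "F (fst p) = F (snd p)"
  using assms(1) by induction (use assms(2-4) in auto)

definition FF :: "('x::finite \<Rightarrow> real) \<Rightarrow> ('x \<Rightarrow> real) \<Rightarrow> real" where
  "FF g u = (\<Sum>x\<in>UNIV. u x * g x)"

lemma FF_scale: "FF g (\<lambda>z. c * u z) = c * FF g u"
  unfolding FF_def by (simp add: sum_distrib_left algebra_simps)

lemma FF_add: "FF g (\<lambda>z. u z + u' z) = FF g u + FF g u'"
  unfolding FF_def by (simp add: sum.distrib algebra_simps)

lemma FF_dirac: "FF g (dirac_vec x) = g x"
proof -
  have e: "(\<lambda>z. dirac_vec x z * g z) = (\<lambda>z. if x = z then g z else 0)"
    by (auto simp: dirac_vec_def)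
  show ?thesis unfolding FF_def e by simp
qed

lemma cclos_FF:
  assumes "(u,v) \<in> cclos R" "\<forall>(u,v)\<in>R. FF g u = FF g v"
  shows "FF g u = FF g v"
  using cclos_kernel[OF assms(1) assms(2) FF_scale FF_add] by simp

definition cm :: "('x \<Rightarrow> 'a word_inf measure) \<Rightarrow> 'a list \<Rightarrow> 'x \<Rightarrow> real" where
  "cm tr w x = measure (tr x) (cone w)"

definition em :: "('x \<Rightarrow> 'a word_inf measure) \<Rightarrow> 'a list \<Rightarrow> 'x \<Rightarrow> real" where
  "em tr w x = measure (tr x) {Inl w}"

lemma cone_Nil: "cone [] = UNIV"
proof -
  { fix z :: "'a word_inf" have "z \<in> cone []" by (cases z) (auto simp: cone_def) }
  then show ?thesis by auto
qed
  
lemma space_Ainf: "space Ainf = UNIV"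
  unfolding Ainf_def by (simp add: space_measure_of_conv)

lemma sets_Ainf: "sets Ainf = sigma_sets UNIV inf_gens"
  unfolding Ainf_def by (rule sets_measure_of) simp

lemma tr_finite:
  assumes "is_trace_sem \<alpha> tr"
  shows "finite_measure (tr x)"
proof (rule finite_measureI)
  have "space (tr x) = UNIV" using assms space_Ainf unfolding is_trace_sem_def by simp
  then show "emeasure (tr x) (space (tr x)) \<noteq> \<infinity>" using assms unfolding is_trace_sem_def by simp
qed

lemma tr_emeasure:
  assumes "is_trace_sem \<alpha> tr"
  shows "emeasure (tr x) A = ennreal (measure (tr x) A)"
  using finite_measure.emeasure_eq_measure[OF tr_finite[OF assms]] .

lemma cm_Nil:
  assumes "is_trace_sem \<alpha> tr"
  shows "cm tr [] x = 1"
proof -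
  have "emeasure (tr x) UNIV = 1" using assms unfolding is_trace_sem_def by simp
  then show ?thesis unfolding cm_def cone_Nil by (simp add: measure_def)
qed

lemma em_Nil:
  assumes "is_trace_sem \<alpha> tr"
  shows "em tr [] x = pmf (\<alpha> x) None"
proof -
  have "emeasure (tr x) {Inl []} = ennreal (pmf (\<alpha> x) None)" using assms unfolding is_trace_sem_def by simp
  then show ?thesis unfolding em_def by (simp add: measure_def)
qed

lemma cm_Cons:
  assumes "is_trace_sem \<alpha> tr"
  shows "cm tr (a # w) x = (\<Sum>y\<in>UNIV. pmf (\<alpha> x) (Some (a, y)) * cm tr w y)"
proof -
  have "emeasure (tr x) (cone (a # w)) = (\<Sum>y\<in>UNIV. ennreal (pmf (\<alpha> x) (Some (a, y))) * emeasure (tr y) (cone w))"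
    using assms unfolding is_trace_sem_def by blast
  then have "ennreal (cm tr (a # w) x) = (\<Sum>y\<in>UNIV. ennreal (pmf (\<alpha> x) (Some (a, y))) * ennreal (cm tr w y))"
    unfolding cm_def by (simp only: tr_emeasure[OF assms])
  also have "\<dots> = ennreal (\<Sum>y\<in>UNIV. pmf (\<alpha> x) (Some (a, y)) * cm tr w y)"
    by (simp add: ennreal_mult[symmetric] sum_ennreal cm_def)
  finally show ?thesis by (simp add: cm_def sum_nonneg)
qed

lemma em_Cons:
  assumes "is_trace_sem \<alpha> tr"
  shows "em tr (a # w) x = (\<Sum>y\<in>UNIV. pmf (\<alpha> x) (Some (a, y)) * em tr w y)"
proof -
  have "emeasure (tr x) ({Inl (a # w)}) = (\<Sum>y\<in>UNIV. ennreal (pmf (\<alpha> x) (Some (a, y))) * emeasure (tr y) ({Inl w}))"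
    using assms unfolding is_trace_sem_def by blast
  then have "ennreal (em tr (a # w) x) = (\<Sum>y\<in>UNIV. ennreal (pmf (\<alpha> x) (Some (a, y))) * ennreal (em tr w y))"
    unfolding em_def by (simp only: tr_emeasure[OF assms])
  also have "\<dots> = ennreal (\<Sum>y\<in>UNIV. pmf (\<alpha> x) (Some (a, y)) * em tr w y)"
    by (simp add: ennreal_mult[symmetric] sum_ennreal em_def)
  finally show ?thesis by (simp add: em_def sum_nonneg)
qed

lemma FF_Cons_gen:
  assumes "\<And>x. g' x = (\<Sum>y\<in>UNIV. pmf (\<alpha> x) (Some (a, y)) * g y)"
  shows "FF g' u = FF g (tau \<alpha> a u)"
proof -
  have "FF g' u = (\<Sum>x\<in>UNIV. \<Sum>y\<in>UNIV. u x * pmf (\<alpha> x) (Some (a, y)) * g y)"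
    unfolding FF_def assms by (simp add: sum_distrib_left mult.assoc)
  also have "\<dots> = (\<Sum>y\<in>UNIV. \<Sum>x\<in>UNIV. u x * pmf (\<alpha> x) (Some (a, y)) * g y)"
    by (rule sum.swap)
  also have "\<dots> = FF g (tau \<alpha> a u)"
    unfolding FF_def tau_def by (simp add: sum_distrib_right)
  finally show ?thesis .
qed

lemma FF_cm_Cons:
  assumes "is_trace_sem \<alpha> tr"
  shows "FF (cm tr (a # w)) u = FF (cm tr w) (tau \<alpha> a u)"
  by (rule FF_Cons_gen) (rule cm_Cons[OF assms])

lemma FF_em_Cons:
  assumes "is_trace_sem \<alpha> tr"
  shows "FF (em tr (a # w)) u = FF (em tr w) (tau \<alpha> a u)"
  by (rule FF_Cons_gen) (rule em_Cons[OF assms])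

lemma FF_cm_Nil:
  assumes "is_trace_sem \<alpha> tr"
  shows "FF (cm tr []) u = beta1 u"
  unfolding FF_def beta1_def cm_Nil[OF assms] by simp

lemma FF_em_Nil:
  assumes "is_trace_sem \<alpha> tr"
  shows "FF (em tr []) u = betastar \<alpha> u"
  unfolding FF_def betastar_def em_Nil[OF assms] by simp

section \<open>Uniqueness of the trace measures\<close>

lemma cone_append_sub: "cone (v @ r) \<subseteq> cone v"
  unfolding cone_def by (auto simp: nth_append)

lemma cone_prefix:
  assumes "z \<in> cone v" "z \<in> cone w"
  shows "(\<exists>r. w = v @ r) \<or> (\<exists>r. v = w @ r)"
proof (cases z)
  case (Inl s)
  have "\<exists>r1. s = v @ r1" using assms(1) Inl unfolding cone_def by auto
  moreover have "\<exists>r2. s = w @ r2" using assms(2) Inl unfolding cone_def by auto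
  ultimately obtain r1 r2 where "s = v @ r1" "s = w @ r2" by blast
  then show ?thesis by (metis append_eq_append_conv2)
next
  case (Inr f)
  then have fv: "\<forall>i<length v. f i = v ! i" and fw: "\<forall>i<length w. f i = w ! i"
    using assms unfolding cone_def by auto
  show ?thesis
  proof (cases "length v \<le> length w")
    case True
    have "take (length v) w = v"
      by (rule nth_equalityI) (use True fv fw in auto)
    then have "w = v @ drop (length v) w" by (metis append_take_drop_id)
    then show ?thesis by blast
  next
    case False
    have "take (length w) v = w"
      by (rule nth_equalityI) (use False fv fw in auto)
    then have "v = w @ drop (length w) v" by (metis append_take_drop_id)
    then show ?thesis by blast
  qed
qed

lemma cone_Int: "cone v \<inter> cone w \<in> inf_gens"
proof -
  consider (a) r where "w = v @ r" | (b) r where "v = w @ r" | (c) "cone v \<inter> cone w = {}"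
    using cone_prefix by blast
  then show ?thesis
  proof cases
    case a
    then have "cone v \<inter> cone w = cone w" using cone_append_sub by blast
    then show ?thesis unfolding inf_gens_def by auto
  next
    case b
    then have "cone v \<inter> cone w = cone v" using cone_append_sub by blast
    then show ?thesis unfolding inf_gens_def by auto
  next
    case c
    then show ?thesis unfolding inf_gens_def by auto
  qed
qed

lemma single_Int: "{Inl w} \<inter> X \<in> inf_gens" "X \<inter> {Inl w} \<in> inf_gens"
proof -
  have "{Inl w} \<inter> X = (if Inl w \<in> X then {Inl w} else {})" by auto
  then show "{Inl w} \<inter> X \<in> inf_gens" unfolding inf_gens_def by auto
  have "X \<inter> {Inl w} = (if Inl w \<in> X then {Inl w} else {})" by auto
  then show "X \<inter> {Inl w} \<in> inf_gens" unfolding inf_gens_def by auto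
qed

lemma Int_stable_inf_gens: "Int_stable (inf_gens :: 'a word_inf set set)"
  unfolding Int_stable_def
proof (intro ballI)
  fix a b :: "'a word_inf set" assume a: "a \<in> inf_gens" and b: "b \<in> inf_gens"
  show "a \<inter> b \<in> inf_gens"
  proof -
    have ea: "a = {} \<or> (\<exists>w. a = {Inl w}) \<or> (\<exists>v. a = cone v)" using a unfolding inf_gens_def by auto
    have eb: "b = {} \<or> (\<exists>w. b = {Inl w}) \<or> (\<exists>v. b = cone v)" using b unfolding inf_gens_def by auto
    have e0: "{} \<in> inf_gens" unfolding inf_gens_def by auto
    show ?thesis using ea eb
      by (elim disjE exE) (use e0 single_Int cone_Int in auto)
  qed
qed

lemma tr_eq:
  assumes tr: "is_trace_sem \<alpha> tr" and eq: "\<forall>w. cm tr w x = cm tr w y \<and> em tr w x = em tr w y"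
  shows "tr x = tr y"
proof (rule measure_eqI_generator_eq[where E=inf_gens and \<Omega>=UNIV and A="\<lambda>_. cone []"])
  show "Int_stable inf_gens" by (rule Int_stable_inf_gens)
  show "inf_gens \<subseteq> Pow UNIV" by simp
  show "emeasure (tr x) X = emeasure (tr y) X" if "X \<in> inf_gens" for X
    using that eq unfolding inf_gens_def cm_def em_def by (auto simp: tr_emeasure[OF tr])
  show "sets (tr x) = sigma_sets UNIV inf_gens" "sets (tr y) = sigma_sets UNIV inf_gens"
    using tr sets_Ainf unfolding is_trace_sem_def by auto
  show "range (\<lambda>_. cone []) \<subseteq> inf_gens" unfolding inf_gens_def by auto
  show "(\<Union>i. cone []) = UNIV" by (simp add: cone_Nil)
  show "emeasure (tr x) (cone []) \<noteq> \<infinity>" for i :: nat by (simp add: tr_emeasure[OF tr])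
qed

section \<open>Termination\<close>

definition dvec :: "('x::finite \<Rightarrow> real) \<Rightarrow> ('x \<Rightarrow> real) \<Rightarrow> real^'x" where
  "dvec u v = (\<chi> z. u z - v z)"

definition dvs :: "(('x::finite \<Rightarrow> real) \<times> ('x \<Rightarrow> real)) set \<Rightarrow> (real^'x) set" where
  "dvs R = (\<lambda>p. dvec (fst p) (snd p)) ` R"

lemma span_cclos:
  assumes "d \<in> span (dvs R)"
  shows "\<forall>v. ((\<lambda>z. d $ z + v z), v) \<in> cclos R"
  using assms
proof (induction rule: span_induct_alt)
  case base
  then show ?case by (simp add: cclos.refl)
next
  case (step c x y)
  then obtain a b where ab: "(a, b) \<in> R" "x = dvec a b" unfolding dvs_def by auto
  show ?case
  proof
    fix v :: "'a \<Rightarrow> real"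
    have h1: "((\<lambda>z. c * a z), (\<lambda>z. c * b z)) \<in> cclos R"
      using ab(1) by (intro cclos.scale cclos.base)
    define w where "w = (\<lambda>z. y $ z + v z - c * b z)"
    have h2: "((\<lambda>z. c * a z + w z), (\<lambda>z. c * b z + w z)) \<in> cclos R"
      using cclos.add[OF h1 cclos.refl[of w]] by simp
    have e1: "(\<lambda>z. c * a z + w z) = (\<lambda>z. (c *\<^sub>R x + y) $ z + v z)"
      unfolding w_def ab(2) dvec_def by (rule ext) (simp add: algebra_simps)
    have e2: "(\<lambda>z. c * b z + w z) = (\<lambda>z. y $ z + v z)"
      unfolding w_def by (rule ext) simp
    have h3: "((\<lambda>z. y $ z + v z), v) \<in> cclos R" using step(2) by blast
    show "((\<lambda>z. (c *\<^sub>R x + y) $ z + v z), v) \<in> cclos R"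
    proof -
      have "((\<lambda>z. c * a z + w z), (\<lambda>z. y $ z + v z)) \<in> cclos R" using h2 unfolding e2 .
      from cclos.trans[OF this h3] show ?thesis unfolding e1 .
    qed
  qed
qed

lemma notin_span:
  assumes "(u, v) \<notin> cclos R"
  shows "dvec u v \<notin> span (dvs R)"
proof
  assume "dvec u v \<in> span (dvs R)"
  from span_cclos[OF this] have "((\<lambda>z. dvec u v $ z + v z), v) \<in> cclos R" by blast
  moreover have "(\<lambda>z. dvec u v $ z + v z) = u" by (rule ext) (simp add: dvec_def)
  ultimately show False using assms by simp
qed

fun meas :: "nat \<Rightarrow> ('x::finite) hkc_state \<Rightarrow> nat" where
  "meas K (Running R T) = (DIM(real^'x) - dim (dvs R)) * K + size T"
| "meas K (Done b) = 0"

lemma Done_no_step: "\<not> hkc_step \<alpha> (Done b) s"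
  by (auto elim: hkc_step.cases)

lemma step_dec:
  fixes \<alpha> :: "'x::finite \<Rightarrow> ('a::finite \<times> 'x) option pmf"
  assumes "hkc_step \<alpha> s s'"
  shows "(\<exists>b. s' = Done b) \<or> meas CARD('a) s' < meas CARD('a) s"
  using assms
proof cases
  case (skip p todo R)
  then have "todo \<noteq> {#}" by auto
  then have "size todo > 0" by (simp add: nonempty_has_size)
  then show ?thesis using skip by (simp add: size_Diff_singleton)
next
  case (expand u v todo R)
  let ?N = "DIM(real^'x)" and ?K = "CARD('a)"
  have K: "?K > 0" by simp
  have d1: "dim (dvs (insert (u, v) R)) = dim (dvs R) + 1"
    using notin_span[OF expand(4)] by (simp add: dvs_def dim_insert)
  have d2: "dim (dvs (insert (u, v) R)) \<le> ?N" by (rule dim_subset_UNIV)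
  have "todo \<noteq> {#}" using expand(3) by auto
  then have sz: "size todo > 0" by (simp add: nonempty_has_size)
  define n where "n = ?N - dim (dvs (insert (u, v) R))"
  have n: "?N - dim (dvs R) = Suc n" "?N - dim (dvs (insert (u, v) R)) = n"
    using d1 d2 unfolding n_def by linarith+
  have "meas ?K s' = n * ?K + (size todo - 1 + ?K)"
    using expand n sz by (simp add: size_Diff_singleton)
  also have "\<dots> < Suc n * ?K + size todo" using sz by simp
  also have "\<dots> = meas ?K s" using expand n by simp
  finally show ?thesis by simp
qed auto

lemma no_infinite_run:
  fixes \<alpha> :: "'x::finite \<Rightarrow> ('a::finite \<times> 'x) option pmf"
  shows "\<not> (\<forall>i. hkc_step \<alpha> (f i) (f (Suc i)))"
proof
  assume run: "\<forall>i. hkc_step \<alpha> (f i) (f (Suc i))"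
  have nd: "\<not> (\<exists>b. f (Suc i) = Done b)" for i
    using run Done_no_step by metis
  have dec: "meas CARD('a) (f (Suc (Suc i))) < meas CARD('a) (f (Suc i))" for i
    using step_dec[of \<alpha> "f (Suc i)" "f (Suc (Suc i))"] run nd[of "Suc i"] by blast
  have "meas CARD('a) (f (Suc i)) + i \<le> meas CARD('a) (f (Suc 0))" for i
  proof (induction i)
    case (Suc i) then show ?case using dec[of i] by simp
  qed simp
  from this[of "Suc (meas CARD('a) (f (Suc 0)))"] show False by simp
qed

section \<open>Correctness\<close>

definition Eqv :: "('x::finite \<Rightarrow> 'a word_inf measure) \<Rightarrow> ('x \<Rightarrow> real) \<Rightarrow> ('x \<Rightarrow> real) \<Rightarrow> bool" where
  "Eqv tr u v \<longleftrightarrow> (\<forall>w. FF (cm tr w) u = FF (cm tr w) v \<and> FF (em tr w) u = FF (em tr w) v)"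

lemma Eqv_tau:
  assumes tr: "is_trace_sem \<alpha> tr" and "Eqv tr u v"
  shows "Eqv tr (tau \<alpha> a u) (tau \<alpha> a v)"
  using assms(2) unfolding Eqv_def
  by (metis FF_cm_Cons[OF tr] FF_em_Cons[OF tr])

lemma Eqv_beta:
  assumes tr: "is_trace_sem \<alpha> tr" and "Eqv tr u v"
  shows "beta1 u = beta1 v" "betastar \<alpha> u = betastar \<alpha> v"
  using assms(2) unfolding Eqv_def
  by (metis FF_cm_Nil[OF tr], metis FF_em_Nil[OF tr])

lemma eq_Eqv:
  assumes "tr x = tr y"
  shows "Eqv tr (dirac_vec x) (dirac_vec y)"
  unfolding Eqv_def FF_dirac cm_def em_def using assms by simp

lemma complete:
  assumes tr: "is_trace_sem \<alpha> tr"
    and R: "\<forall>(u,v)\<in>R. beta1 u = beta1 v \<and> betastar \<alpha> u = betastar \<alpha> v \<and>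
               (\<forall>a. (tau \<alpha> a u, tau \<alpha> a v) \<in> cclos R)"
    and xy: "(dirac_vec x, dirac_vec y) \<in> cclos R"
  shows "tr x = tr y"
proof -
  have I: "\<forall>(u,v)\<in>R. FF (cm tr w) u = FF (cm tr w) v \<and> FF (em tr w) u = FF (em tr w) v" for w
  proof (induction w)
    case Nil
    then show ?case using R by (auto simp: FF_cm_Nil[OF tr] FF_em_Nil[OF tr])
  next
    case (Cons a w)
    have c: "\<forall>(u,v)\<in>R. FF (cm tr w) u = FF (cm tr w) v" using Cons by auto
    have e: "\<forall>(u,v)\<in>R. FF (em tr w) u = FF (em tr w) v" using Cons by auto
    show ?case
    proof (intro ballI, clarify)
      fix u v assume uv: "(u, v) \<in> R"
      then have t: "(tau \<alpha> a u, tau \<alpha> a v) \<in> cclos R" using R by auto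
      show "FF (cm tr (a # w)) u = FF (cm tr (a # w)) v \<and> FF (em tr (a # w)) u = FF (em tr (a # w)) v"
        unfolding FF_cm_Cons[OF tr] FF_em_Cons[OF tr]
        using cclos_FF[OF t c] cclos_FF[OF t e] by simp
    qed
  qed
  have "\<forall>w. cm tr w x = cm tr w y \<and> em tr w x = em tr w y"
  proof
    fix w
    have c: "\<forall>(u,v)\<in>R. FF (cm tr w) u = FF (cm tr w) v" using I by auto
    have e: "\<forall>(u,v)\<in>R. FF (em tr w) u = FF (em tr w) v" using I by auto
    show "cm tr w x = cm tr w y \<and> em tr w x = em tr w y"
      using cclos_FF[OF xy c] cclos_FF[OF xy e] by (simp add: FF_dirac)
  qed
  then show ?thesis by (rule tr_eq[OF tr])
qed

definition Inv :: "('x::finite \<Rightarrow> ('a::finite \<times> 'x) option pmf) \<Rightarrow> ('x \<Rightarrow> 'a word_inf measure) \<Rightarrow> 'x \<Rightarrow> 'x \<Rightarrow> 'x hkc_state \<Rightarrow> bool" where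
  "Inv \<alpha> tr x y s = (case s of
     Running R T \<Rightarrow> (dirac_vec x, dirac_vec y) \<in> cclos (R \<union> set_mset T) \<and>
        (\<forall>(u,v)\<in>R. beta1 u = beta1 v \<and> betastar \<alpha> u = betastar \<alpha> v \<and>
               (\<forall>a. (tau \<alpha> a u, tau \<alpha> a v) \<in> cclos (R \<union> set_mset T))) \<and>
        (tr x = tr y \<longrightarrow> (\<forall>p\<in>#T. Eqv tr (fst p) (snd p)))
   | Done b \<Rightarrow> (b \<longleftrightarrow> tr x = tr y))"

lemma in_remove1_mset_neq: "q \<noteq> p \<Longrightarrow> q \<in># M - {#p#} \<longleftrightarrow> q \<in># M"
  by (auto simp: in_diff_count dest: in_diffD)

lemma cclos_mono_sub:
  assumes "S \<subseteq> cclos S'"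
  shows "cclos S \<subseteq> cclos S'"
  using cclos_sub assms by blast

lemma Inv_step:
  fixes \<alpha> :: "'x::finite \<Rightarrow> ('a::finite \<times> 'x) option pmf"
  assumes tr: "is_trace_sem \<alpha> tr" and st: "hkc_step \<alpha> s s'" and I: "Inv \<alpha> tr x y s"
  shows "Inv \<alpha> tr x y s'"
  using st
proof cases
  case (finish R)
  then show ?thesis using I complete[OF tr] unfolding Inv_def by auto
next
  case (skip p todo R)
  let ?T' = "todo - {#p#}"
  have sub: "R \<union> set_mset todo \<subseteq> cclos (R \<union> set_mset ?T')"
  proof
    fix q assume q: "q \<in> R \<union> set_mset todo"
    show "q \<in> cclos (R \<union> set_mset ?T')"
    proof (cases "q = p")
      case True
      have "R \<subseteq> cclos (R \<union> set_mset ?T')" by (auto intro: cclos.base)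
      then show ?thesis using True skip(4) cclos_sub by blast
    next
      case False
      then have "q \<in> R \<union> set_mset ?T'" using q by (auto simp: in_remove1_mset_neq)
      then show ?thesis by (rule cclos.base)
    qed
  qed
  have m: "cclos (R \<union> set_mset todo) \<subseteq> cclos (R \<union> set_mset ?T')"
    by (rule cclos_mono_sub[OF sub])
  have I1: "(dirac_vec x, dirac_vec y) \<in> cclos (R \<union> set_mset todo)"
    and I2: "\<forall>(u,v)\<in>R. beta1 u = beta1 v \<and> betastar \<alpha> u = betastar \<alpha> v \<and>
               (\<forall>a. (tau \<alpha> a u, tau \<alpha> a v) \<in> cclos (R \<union> set_mset todo))"
    and I3: "tr x = tr y \<longrightarrow> (\<forall>p\<in>#todo. Eqv tr (fst p) (snd p))"
    using I skip unfolding Inv_def by auto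
  have J2: "\<forall>(u,v)\<in>R. beta1 u = beta1 v \<and> betastar \<alpha> u = betastar \<alpha> v \<and>
               (\<forall>a. (tau \<alpha> a u, tau \<alpha> a v) \<in> cclos (R \<union> set_mset ?T'))"
    using I2 m by blast
  have J3: "tr x = tr y \<longrightarrow> (\<forall>p\<in>#?T'. Eqv tr (fst p) (snd p))"
    using I3 by (auto dest: in_diffD)
  show ?thesis unfolding Inv_def skip(2) using m I1 J2 J3 by auto
next
  case (fail u v todo R)
  have "tr x \<noteq> tr y"
  proof
    assume "tr x = tr y"
    then have "Eqv tr u v" using I fail unfolding Inv_def by auto
    then show False using Eqv_beta[OF tr] fail by auto
  qed
  then show ?thesis using fail unfolding Inv_def by simp
next
  case (expand u v todo R)
  let ?R' = "insert (u, v) R"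
  let ?N = "image_mset (\<lambda>a. (tau \<alpha> a u, tau \<alpha> a v)) (mset_set (UNIV :: 'a set))"
  let ?T' = "(todo - {#(u, v)#}) + ?N"
  have sub: "R \<union> set_mset todo \<subseteq> ?R' \<union> set_mset ?T'"
    by (auto simp: in_remove1_mset_neq)
  have m: "cclos (R \<union> set_mset todo) \<subseteq> cclos (?R' \<union> set_mset ?T')"
    by (rule cclos_mono_sub) (use sub in \<open>auto intro: cclos.base\<close>)
  have new: "(tau \<alpha> a u, tau \<alpha> a v) \<in> cclos (?R' \<union> set_mset ?T')" for a
    by (rule cclos.base) simp
  have I1: "(dirac_vec x, dirac_vec y) \<in> cclos (R \<union> set_mset todo)"
    and I2: "\<forall>(u,v)\<in>R. beta1 u = beta1 v \<and> betastar \<alpha> u = betastar \<alpha> v \<and>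
               (\<forall>a. (tau \<alpha> a u, tau \<alpha> a v) \<in> cclos (R \<union> set_mset todo))"
    and I3: "tr x = tr y \<longrightarrow> (\<forall>p\<in>#todo. Eqv tr (fst p) (snd p))"
    using I expand unfolding Inv_def by auto
  have J3: "tr x = tr y \<longrightarrow> (\<forall>p\<in>#?T'. Eqv tr (fst p) (snd p))"
  proof (intro impI ballI)
    fix p assume eq: "tr x = tr y" and p: "p \<in># ?T'"
    then consider "p \<in># todo" | a where "p = (tau \<alpha> a u, tau \<alpha> a v)"
      by (auto dest: in_diffD)
    then show "Eqv tr (fst p) (snd p)"
    proof cases
      case 1 then show ?thesis using I3 eq by auto
    next
      case 2
      have "Eqv tr u v" using I3 eq expand(3) by auto
      then show ?thesis using 2 Eqv_tau[OF tr] by simp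
    qed
  qed
  have J2: "\<forall>(u',v')\<in>?R'. beta1 u' = beta1 v' \<and> betastar \<alpha> u' = betastar \<alpha> v' \<and>
               (\<forall>a. (tau \<alpha> a u', tau \<alpha> a v') \<in> cclos (?R' \<union> set_mset ?T'))"
    using I2 m new expand(5,6) by blast
  show ?thesis unfolding Inv_def expand(2) using m I1 J2 J3 by auto
qed

lemma Inv_steps:
  assumes tr: "is_trace_sem \<alpha> tr" and st: "(hkc_step \<alpha>)\<^sup>*\<^sup>* s s'" and I: "Inv \<alpha> tr x y s"
  shows "Inv \<alpha> tr x y s'"
  using st I by induction (auto intro: Inv_step[OF tr])

lemma Inv_init: "Inv \<alpha> tr x y (hkc_init x y)"
  unfolding Inv_def hkc_init_def by (auto intro: cclos.base eq_Eqv)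

theorem mainTheorem18:
  fixes \<alpha> :: "'x::finite \<Rightarrow> ('a::finite \<times> 'x) option pmf"
    and tr :: "'x \<Rightarrow> 'a word_inf measure"
    and x y :: 'x
  assumes "is_trace_sem \<alpha> tr"
  shows "\<not> (\<exists>f. f 0 = hkc_init x y \<and> (\<forall>i. hkc_step \<alpha> (f i) (f (Suc i)))) \<and>
         (\<forall>b. (hkc_step \<alpha>)\<^sup>*\<^sup>* (hkc_init x y) (Done b) \<longrightarrow> (b \<longleftrightarrow> tr x = tr y))"
proof
  show "\<not> (\<exists>f. f 0 = hkc_init x y \<and> (\<forall>i. hkc_step \<alpha> (f i) (f (Suc i))))"
    using no_infinite_run[of \<alpha>] by blast
  show "\<forall>b. (hkc_step \<alpha>)\<^sup>*\<^sup>* (hkc_init x y) (Done b) \<longrightarrow> (b \<longleftrightarrow> tr x = tr y)"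
  proof (intro allI impI)
    fix b assume "(hkc_step \<alpha>)\<^sup>*\<^sup>* (hkc_init x y) (Done b)"
    from Inv_steps[OF assms this Inv_init] show "b \<longleftrightarrow> tr x = tr y" unfolding Inv_def by simp
  qed
qed

end
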